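(* Let $n\geq 2$, $m\geq 1$ be integers and $K'_{n,m}=T(3,3m+1;2,n-2)$. Its (symmetrized) Alexander polynomial is $$\Delta(K'_{n,m})=(-1)^n+\sum_{i=1}^{n-2}(-1)^{n-i}(t^i+t^{-i})-\sum_{k=0}^{m-1}(t^{n+3k}+t^{-n-3k})+\sum_{k=0}^{m-1}(t^{n+3k+1}+t^{-n-3k-1}).$$
   Context: The twisted torus knot $T(u,v;u',v')$ is obtained from the torus knot $T(u,v)$ by adding $v'$ full right-handed twists on $u'$ adjacent strands. *)

theory Defs
  imports Complex_Main "Jordan_Normal_Form.Determinant"
begin

text \<open>Braid words on n strands: a positive integer g stands for the Artin generator
  sigma_g, a negative integer g for its inverse (1 <= |g| <= n-1).\<close>

text \<open>For sigma_i it is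
  I_(i-2) + [[1,0,0],[t,-t,1],[0,0,1]] + I_(n-i-2) (truncated at the borders).\<close>
definition burau_gen :: "nat \<Rightarrow> int \<Rightarrow> complex \<Rightarrow> complex mat" where
  "burau_gen n g t = (let i = nat \<bar>g\<bar> in
     mat (n - 1) (n - 1) (\<lambda>(r, s).
       if r + 1 = i then
         (if s + 2 = i then (if g > 0 then t else 1)
          else if s + 1 = i then (if g > 0 then - t else - (1 / t))
          else if s = i then (if g > 0 then 1 else 1 / t)
          else 0)
       else (if r = s then 1 else 0)))"

definition burau :: "nat \<Rightarrow> int list \<Rightarrow> complex \<Rightarrow> complex mat" where
  "burau n w t = foldr (\<lambda>g M. burau_gen n g t * M) w (1\<^sub>m (n - 1))"

text \<open>Laurent polynomials with integer coefficients: finitely supported c :: int => int,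
  evaluated at t.\<close>
definition lpeval :: "(int \<Rightarrow> int) \<Rightarrow> complex \<Rightarrow> complex" where
  "lpeval c t = (\<Sum>k\<in>{k. c k \<noteq> 0}. of_int (c k) * t powi k)"

text \<open>The symmetrized Alexander polynomial of the closure of an n-strand braid word:
  the unique finitely supported, symmetric Laurent polynomial with value 1 at t = 1
  which agrees up to a unit (+-t^j) with the Burau formula
  Delta(t) = (1 - t)/(1 - t^n) * det(I - burau(t)).\<close>
definition alexander_sym :: "nat \<Rightarrow> int list \<Rightarrow> (int \<Rightarrow> int)" where
  "alexander_sym n w = (THE c. finite {k. c k \<noteq> 0} \<and> (\<forall>k. c k = c (- k)) \<and>
     sum c {k. c k \<noteq> 0} = 1 \<and>
     (\<exists>\<epsilon>\<in>{1, -1::complex}. \<exists>j::int. \<forall>t::complex. t \<noteq> 0 \<and> 1 - t ^ n \<noteq> 0 \<longrightarrow>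
        (1 - t) * det (1\<^sub>m (n - 1) - burau n w t) = \<epsilon> * t powi j * (1 - t ^ n) * lpeval c t))"

text \<open>Braid word of the twisted torus knot T(u,v;u',v'):
  (sigma_1 ... sigma_(u-1))^v followed by v' full right-handed twists
  (sigma_1 ... sigma_(u'-1))^(u' v') on the first u' strands.\<close>
definition twisted_torus_braid :: "nat \<Rightarrow> nat \<Rightarrow> nat \<Rightarrow> nat \<Rightarrow> int list" where
  "twisted_torus_braid u v u' v' =
     concat (replicate v (map int [1..<u])) @ concat (replicate (u' * v') (map int [1..<u']))"

end

theory Submission
  imports Defs "HOL-Computational_Algebra.Polynomial"
begin

definition mk2 :: "complex \<Rightarrow> complex \<Rightarrow> complex \<Rightarrow> complex \<Rightarrow> complex mat" where
 "mk2 a b c d = mat 2 2 (\<lambda>(i,j). if i = 0 then (if j = 0 then a else b) else (if j = 0 then c else d))"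

lemma mk2_mult: "mk2 a b c d * mk2 e f g h = mk2 (a*e+b*g) (a*f+b*h) (c*e+d*g) (c*f+d*h)"
  by (rule eq_matI) (auto simp: mk2_def scalar_prod_def less_2_cases_iff numeral_2_eq_2)

lemma det1: "A \<in> carrier_mat 1 1 \<Longrightarrow> det A = A $$ (0,0)"
  by (subst det_upper_triangular[of A 1]) (auto simp: diag_mat_def)

lemma mk2_det: "det (mk2 a b c d) = a*d - b*c"
proof -
  have "det (mk2 a b c d) = (\<Sum>j<2. mk2 a b c d $$ (0,j) * cofactor (mk2 a b c d) 0 j)"
    by (rule laplace_expansion_row) (auto simp: mk2_def)
  also have "\<dots> = a*d - b*c"
    by (simp add: cofactor_def numeral_2_eq_2 det1 mat_delete_def mk2_def)
  finally show ?thesis .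
qed


lemma bg1: "burau_gen 3 1 t = mk2 (-t) 1 0 1"
  by (rule eq_matI) (auto simp: burau_gen_def mk2_def less_2_cases_iff numeral_2_eq_2)
lemma bg2: "burau_gen 3 2 t = mk2 1 0 t (-t)"
  by (rule eq_matI) (auto simp: burau_gen_def mk2_def less_2_cases_iff numeral_2_eq_2)
lemma one2: "1\<^sub>m 2 = mk2 1 0 0 1"
  by (rule eq_matI) (auto simp: mk2_def less_2_cases_iff numeral_2_eq_2)
lemma minus2: "mk2 a b c d - mk2 e f g h = mk2 (a-e) (b-f) (c-g) (d-h)"
  by (rule eq_matI) (auto simp: mk2_def less_2_cases_iff numeral_2_eq_2)

lemma braid: "twisted_torus_braid 3 k 2 l = concat (replicate k [1,2]) @ replicate (2*l) 1"
  by (simp add: twisted_torus_braid_def numeral_3_eq_3 numeral_2_eq_2 upt_rec concat_replicate_single)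

definition bf :: "complex \<Rightarrow> int list \<Rightarrow> complex mat \<Rightarrow> complex mat" where
  "bf t w M = foldr (\<lambda>g M. burau_gen 3 g t * M) w M"

lemma bf_rep: "bf t (concat (replicate (a+b) xs)) M = bf t (concat (replicate a xs)) (bf t (concat (replicate b xs)) M)"
  by (simp add: bf_def replicate_add)

lemma bf_X: "bf t [1,2] (mk2 a b c d) = mk2 (-(t*c)) (-(t*d)) (t*a - t*c) (t*b - t*d)"
  by (simp add: bf_def bg1 bg2 mk2_mult algebra_simps)

lemma bf_3: "bf t (concat (replicate 3 [1,2])) (mk2 a b c d) = mk2 (t^3*a) (t^3*b) (t^3*c) (t^3*d)"
proof -
  have "bf t (concat (replicate 3 [1,2])) (mk2 a b c d) = bf t [1,2] (bf t [1,2] (bf t [1,2] (mk2 a b c d)))"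
    by (simp add: bf_def numeral_3_eq_3)
  also have "\<dots> = mk2 (t^3*a) (t^3*b) (t^3*c) (t^3*d)"
    by (simp only: bf_X) (simp add: algebra_simps power3_eq_cube)
  finally show ?thesis .
qed

lemma bf_3k: "bf t (concat (replicate (3*k) [1,2])) (mk2 a b c d) = mk2 (t^(3*k)*a) (t^(3*k)*b) (t^(3*k)*c) (t^(3*k)*d)"
proof (induction k)
  case 0 then show ?case by (simp add: bf_def)
next
  case (Suc k)
  have "bf t (concat (replicate (3*Suc k) [1,2])) (mk2 a b c d) = bf t (concat (replicate 3 [1,2])) (bf t (concat (replicate (3*k) [1,2])) (mk2 a b c d))"
    using bf_rep[of t 3 "3*k" "[1,2]"] by simp
  also have "\<dots> = mk2 (t^(3*Suc k)*a) (t^(3*Suc k)*b) (t^(3*Suc k)*c) (t^(3*Suc k)*d)"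
    by (simp only: Suc bf_3) (simp add: power_add mult.assoc)
  finally show ?case .
qed

lemma bf_sig: "bf t (replicate k 1) (mk2 1 0 0 1) = mk2 ((-t)^k) (\<Sum>i<k. (-t)^i) 0 1"
proof (induction k)
  case 0 then show ?case by (simp add: bf_def)
next
  case (Suc k)
  have "bf t (replicate (Suc k) 1) (mk2 1 0 0 1) = burau_gen 3 1 t * bf t (replicate k 1) (mk2 1 0 0 1)"
    by (simp add: bf_def)
  also have "\<dots> = mk2 ((-t)^Suc k) (\<Sum>i<Suc k. (-t)^i) 0 1"
  proof -
    have "(\<Sum>i<Suc k. (-t)^i) = 1 + (-t) * (\<Sum>i<k. (-t)^i)"
      by (simp only: sum.lessThan_Suc_shift sum_distrib_left) simp
    then show ?thesis by (simp add: Suc bg1 mk2_mult)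
  qed
  finally show ?case .
qed

lemma burau_main:
  "burau 3 (twisted_torus_braid 3 (3 * m + 1) 2 l) t =
   mk2 0 (-(t*t^(3*m))) (t*t^(3*m)*t^(2*l)) (t*t^(3*m)*((\<Sum>i<2*l. (-t)^i) - 1))"
proof -
  have "burau 3 (twisted_torus_braid 3 (3 * m + 1) 2 l) t =
     bf t (concat (replicate (1 + 3*m) [1,2])) (bf t (replicate (2*l) 1) (mk2 1 0 0 1))"
    by (simp add: burau_def braid bf_def one2 add.commute)
  also have "\<dots> = bf t [1,2] (bf t (concat (replicate (3*m) [1,2])) (mk2 (t^(2*l)) (\<Sum>i<2*l. (-t)^i) 0 1))"
    by (simp only: bf_rep bf_sig power_mult_distrib) (simp add: power_mult bf_def)
  also have "\<dots> = mk2 0 (-(t*t^(3*m))) (t*t^(3*m)*t^(2*l)) (t*t^(3*m)*((\<Sum>i<2*l. (-t)^i) - 1))"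
    by (simp only: bf_3k bf_X) (simp add: algebra_simps)
  finally show ?thesis .
qed


lemma partE:
  fixes t :: complex assumes t: "t \<noteq> 0"
  shows "(1-t^3) * t^(r+1) * t^(3*m) * (\<Sum>k<m. (t^(r+2+3*k+1) + inverse (t^(r+2+3*k+1))) - (t^(r+2+3*k) + inverse (t^(r+2+3*k))))
     = t*(t-1)*(1-t^(3*m))*(t^(2*r+2)*t^(3*m) - 1)"
proof (induction m)
  case 0 then show ?case by simp
next
  case (Suc m)
  define E where "E = (\<Sum>k<m. (t^(r+2+3*k+1) + inverse (t^(r+2+3*k+1))) - (t^(r+2+3*k) + inverse (t^(r+2+3*k))))"
  define w where "w = t^r"
  define T where "T = t^(3*m)"
  define it where "it = inverse t"
  define iw where "iw = inverse w"
  define iT where "iT = inverse T"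
  have h1: "t*it = 1" using t by (simp add: it_def)
  have h2: "w*iw = 1" using t by (simp add: iw_def w_def)
  have h3: "T*iT = 1" using t by (simp add: iT_def T_def)
  have IH: "(1-t^3) * (w*t) * T * E = t*(t-1)*(1-T)*(w^2*t^2*T - 1)"
  proof -
    have p1: "t^(r+1) = w*t" "t^(2*r+2) = w^2*t^2" "t^(3*m) = T"
      by (simp_all add: w_def T_def power_add power_mult_distrib mult_2 power2_eq_square)
    show ?thesis using Suc.IH[folded E_def] by (simp only: p1)
  qed
  have e: "(\<Sum>k<Suc m. (t^(r+2+3*k+1) + inverse (t^(r+2+3*k+1))) - (t^(r+2+3*k) + inverse (t^(r+2+3*k))))
     = E + ((w*t^2*T*t + iw*it^2*iT*it) - (w*t^2*T + iw*it^2*iT))"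
    by (simp add: E_def w_def T_def it_def iw_def iT_def power_add inverse_mult_distrib power2_eq_square mult_ac)
  have "(1-t^3) * (w*t) * (T*t^3) * (E + ((w*t^2*T*t + iw*it^2*iT*it) - (w*t^2*T + iw*it^2*iT)))
     = t*(t-1)*(1-T*t^3)*(w^2*t^2*(T*t^3) - 1)"
  proof -
    have k1: "(w*t)*(T*t^3)*(iw*it^2*iT*it) = t"
    proof -
      have "(w*t)*(T*t^3)*(iw*it^2*iT*it) = (w*iw)*(T*iT)*(t*it)*(t*it)*(t*it)*t"
        by (simp add: algebra_simps power2_eq_square power3_eq_cube)
      then show ?thesis using h1 h2 h3 by simp
    qed
    have k2: "(w*t)*(T*t^3)*(iw*it^2*iT) = t^2"
    proof -
      have "(w*t)*(T*t^3)*(iw*it^2*iT) = (w*iw)*(T*iT)*(t*it)*(t*it)*(t*t)"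
        by (simp add: algebra_simps power2_eq_square power3_eq_cube)
      then show ?thesis using h1 h2 h3 by (simp add: power2_eq_square)
    qed
    have L: "(1-t^3) * (w*t) * (T*t^3) * (E + ((w*t^2*T*t + iw*it^2*iT*it) - (w*t^2*T + iw*it^2*iT)))
      = t^3 * ((1-t^3) * (w*t) * T * E) + (1-t^3)*((w*t)*(T*t^3)*(w*t^2*T*t - w*t^2*T)
         + (w*t)*(T*t^3)*(iw*it^2*iT*it) - (w*t)*(T*t^3)*(iw*it^2*iT))"
      by (simp add: algebra_simps)
    show ?thesis unfolding L k1 k2 IH by (simp add: algebra_simps power2_eq_square power3_eq_cube)
  qed
  moreover have p1: "t^(r+1) = w*t" "t^(2*r+2) = w^2*t^2" "t^(3*Suc m) = T*t^3"
    by (simp_all add: w_def T_def power_add power_mult_distrib mult_2 power2_eq_square)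
  ultimately show ?case
    by (simp only: e p1)
qed

lemma partA:
  fixes t :: complex assumes t: "t \<noteq> 0"
  shows "t^r * ((-1)^(r+2) + (\<Sum>i=1..r. (-1)^(r+2-i) * (t^i + inverse (t^i)))) = (\<Sum>j<2*r+1. (-t)^j)"
proof (induction r)
  case 0 then show ?case by simp
next
  case (Suc r)
  have s1: "(\<Sum>i=1..Suc r. (-1)^(Suc r+2-i) * (t^i + inverse (t^i))) = 
     - (\<Sum>i=1..r. (-1)^(r+2-i) * (t^i + inverse (t^i))) + (t^Suc r + inverse (t^Suc r))"
  proof -
    have "(\<Sum>i=1..r. (-1)^(Suc r+2-i) * (t^i + inverse (t^i))) = (\<Sum>i=1..r. - ((-1)^(r+2-i) * (t^i + inverse (t^i))))"
      by (rule sum.cong) (auto simp: Suc_diff_le)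
    then show ?thesis by (simp add: sum_negf)
  qed
  have s2: "(\<Sum>j<2*Suc r+1. (-t)^j) = 1 + (-t) * (\<Sum>j<2*r+1. (-t)^j) + t^(2*r+2)"
  proof -
    have "(\<Sum>j<2*Suc r+1. (-t)^j) = (\<Sum>j<Suc (2*r+1). (-t)^j) + (-t)^(2*r+2)" by simp
    also have "(\<Sum>j<Suc (2*r+1). (-t)^j) = 1 + (-t) * (\<Sum>j<2*r+1. (-t)^j)"
      by (simp only: sum.lessThan_Suc_shift sum_distrib_left) simp
    finally show ?thesis by (simp add: power_mult_distrib)
  qed
  define S where "S = (\<Sum>i=1..r. (-1)^(r+2-i) * (t^i + inverse (t^i)))"
  have "t^Suc r * ((-1)^(Suc r+2) + (- S + (t^Suc r + inverse (t^Suc r)))) = 1 + (-t) * (t^r * ((-1)^(r+2) + S)) + t^(2*r+2)"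
    using t by (simp add: field_simps power_add mult_2 power_mult power2_eq_square)
  then show ?case using Suc.IH s1 s2 by (simp add: S_def)
qed



lemma lp_sum: "finite F \<Longrightarrow> {k. c k \<noteq> 0} \<subseteq> F \<Longrightarrow> lpeval c t = (\<Sum>k\<in>F. of_int (c k) * t powi k)"
  unfolding lpeval_def by (rule sum.mono_neutral_left) auto

lemma int_bounded: "finite (A::int set) \<Longrightarrow> \<exists>N::nat. A \<subseteq> {- int N..int N}"
proof -
  assume fin: "finite A"
  define N where "N = nat (Max (abs ` insert 0 A))"
  have "\<forall>k\<in>A. \<bar>k\<bar> \<le> Max (abs ` insert 0 A)" using fin by (intro ballI Max_ge) auto
  then have "A \<subseteq> {- int N..int N}" unfolding N_def by force
  then show ?thesis by blast
qed

lemma lp_zero: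
  assumes fin: "finite {k. d k \<noteq> 0}" and S: "infinite S" and z: "\<forall>t\<in>S. t \<noteq> 0 \<and> lpeval d t = 0"
  shows "d k = 0"
proof -
  obtain N :: nat where N: "{k. d k \<noteq> 0} \<subseteq> {- int N..int N}" using int_bounded[OF fin] by blast
  define F where "F = {- int N..int N}"
  define p where "p = (\<Sum>k\<in>F. monom (of_int (d k) :: complex) (nat (k + int N)))"
  have ev: "poly p t = t^N * lpeval d t" if "t \<noteq> 0" for t
  proof -
    have "lpeval d t = (\<Sum>k\<in>F. of_int (d k) * t powi k)" using N by (intro lp_sum) (auto simp: F_def)
    then have "t^N * lpeval d t = (\<Sum>k\<in>F. of_int (d k) * (t powi int N * t powi k))"
      by (simp add: sum_distrib_left power_int_of_nat mult_ac)
    also have "\<dots> = (\<Sum>k\<in>F. of_int (d k) * t ^ nat (k + int N))"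
    proof (rule sum.cong)
      fix k assume "k \<in> F"
      then have "t powi int N * t powi k = t powi (k + int N)" using that by (simp add: power_int_add add.commute)
      also have "\<dots> = t ^ nat (k + int N)" using \<open>k \<in> F\<close> by (simp add: F_def power_int_def)
      finally show "of_int (d k) * (t powi int N * t powi k) = of_int (d k) * t ^ nat (k + int N)" by simp
    qed simp
    finally show ?thesis by (simp add: p_def poly_sum poly_monom)
  qed
  have "p = 0"
  proof (rule ccontr)
    assume "p \<noteq> 0"
    then have "finite {x. poly p x = 0}" by (rule poly_roots_finite)
    moreover have "S \<subseteq> {x. poly p x = 0}" using z ev by auto
    ultimately show False using S finite_subset by blast
  qed
  show "d k = 0"
  proof (cases "k \<in> F")
    case True
    have "coeff p (nat (k + int N)) = (\<Sum>k'\<in>F. if k' = k then of_int (d k') else 0)"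
      unfolding p_def coeff_sum coeff_monom
      by (rule sum.cong) (use True in \<open>auto simp: F_def\<close>)
    also have "\<dots> = of_int (d k)" using True by (simp add: F_def)
    finally show ?thesis using \<open>p = 0\<close> by simp
  next
    case False then show ?thesis using N F_def by blast
  qed
qed

lemma lp_shift:
  assumes fin: "finite {k. c k \<noteq> 0}" and t: "t \<noteq> 0"
  shows "lpeval (\<lambda>k. c (k - j)) t = t powi j * lpeval c t"
proof -
  have eq: "{k. c (k - j) \<noteq> 0} = (\<lambda>k. k + j) ` {k. c k \<noteq> 0}" by force
  have "lpeval (\<lambda>k. c (k - j)) t = (\<Sum>k\<in>(\<lambda>k. k + j) ` {k. c k \<noteq> 0}. of_int (c (k - j)) * t powi k)"
    unfolding lpeval_def eq ..
  also have "\<dots> = (\<Sum>k\<in>{k. c k \<noteq> 0}. of_int (c k) * t powi (k + j))"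
    by (subst sum.reindex) (auto simp: inj_on_def)
  also have "\<dots> = t powi j * lpeval c t"
    unfolding lpeval_def sum_distrib_left using t by (intro sum.cong) (auto simp: power_int_add)
  finally show ?thesis .
qed

lemma lp_lin:
  assumes "finite {k. f k \<noteq> 0}" "finite {k. g k \<noteq> 0}"
  shows "lpeval (\<lambda>k. a * f k + b * g k) t = of_int a * lpeval f t + of_int b * lpeval g t"
proof -
  let ?F = "{k. f k \<noteq> 0} \<union> {k. g k \<noteq> 0}"
  have "lpeval (\<lambda>k. a * f k + b * g k) t = (\<Sum>k\<in>?F. of_int (a * f k + b * g k) * t powi k)"
    using assms by (intro lp_sum) auto
  also have "\<dots> = of_int a * (\<Sum>k\<in>?F. of_int (f k) * t powi k) + of_int b * (\<Sum>k\<in>?F. of_int (g k) * t powi k)"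
    by (simp add: sum_distrib_left sum.distrib algebra_simps)
  also have "\<dots> = of_int a * lpeval f t + of_int b * lpeval g t"
    using assms lp_sum[of ?F f t] lp_sum[of ?F g t] by auto
  finally show ?thesis .
qed

lemma lp_one: "lpeval c 1 = of_int (sum c {k. c k \<noteq> 0})"
  unfolding lpeval_def by simp

definition PP :: "(complex \<Rightarrow> complex) \<Rightarrow> (int \<Rightarrow> int) \<Rightarrow> bool" where
  "PP X c = (finite {k. c k \<noteq> 0} \<and> (\<forall>k. c k = c (- k)) \<and>
     sum c {k. c k \<noteq> 0} = 1 \<and>
     (\<exists>\<epsilon>\<in>{1, -1::complex}. \<exists>j::int. \<forall>t::complex. t \<noteq> 0 \<and> 1 - t ^ 3 \<noteq> 0 \<longrightarrow>
        X t = \<epsilon> * t powi j * (1 - t ^ 3) * lpeval c t))"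

lemma uniq:
  assumes P1: "PP X c" and P2: "PP X c'"
  shows "c = c'"
proof -
  from P1 obtain \<epsilon> j where fin1: "finite {k. c k \<noteq> 0}" and sym1: "\<forall>k. c k = c (- k)"
    and s1: "sum c {k. c k \<noteq> 0} = 1" and e1: "\<epsilon> \<in> {1, -1}"
    and X1: "\<forall>t. t \<noteq> 0 \<and> 1 - t ^ 3 \<noteq> 0 \<longrightarrow> X t = \<epsilon> * t powi j * (1 - t ^ 3) * lpeval c t"
    unfolding PP_def by blast
  from P2 obtain \<epsilon>' j' where fin2: "finite {k. c' k \<noteq> 0}" and sym2: "\<forall>k. c' k = c' (- k)"
    and s2: "sum c' {k. c' k \<noteq> 0} = 1" and e2: "\<epsilon>' \<in> {1, -1}"
    and X2: "\<forall>t. t \<noteq> 0 \<and> 1 - t ^ 3 \<noteq> 0 \<longrightarrow> X t = \<epsilon>' * t powi j' * (1 - t ^ 3) * lpeval c' t"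
    unfolding PP_def by blast
  have "\<exists>x::int. x \<in> {1,-1} \<and> \<epsilon> = of_int x" using e1
    by (cases "\<epsilon> = 1") (auto intro: exI[of _ "1::int"] exI[of _ "-1::int"])
  then obtain e :: int where e: "e \<in> {1,-1}" "\<epsilon> = of_int e" by blast
  have "\<exists>x::int. x \<in> {1,-1} \<and> \<epsilon>' = of_int x" using e2
    by (cases "\<epsilon>' = 1") (auto intro: exI[of _ "1::int"] exI[of _ "-1::int"])
  then obtain e' :: int where e': "e' \<in> {1,-1}" "\<epsilon>' = of_int e'" by blast
  define S where "S = range (\<lambda>k::nat. of_nat (k + 2) :: complex)"
  have S_inf: "infinite S"
  proof
    assume "finite S"
    then have "finite (UNIV :: nat set)" unfolding S_def
      by (rule finite_imageD) (auto simp: inj_on_def)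
    then show False by simp
  qed
  have S_good: "t \<noteq> 0 \<and> 1 - t ^ 3 \<noteq> 0" if "t \<in> S" for t
  proof -
    obtain k :: nat where k: "t = of_nat (k + 2)" using \<open>t \<in> S\<close> S_def by auto
    have "(k+2)^3 \<noteq> (1::nat)" using one_less_power[of "k+2" 3] by linarith
    moreover have "t^3 = of_nat ((k+2)^3)" using k by simp
    ultimately have "t^3 \<noteq> 1" by (simp only: of_nat_eq_1_iff not_False_eq_True)
    moreover have "k + 2 \<noteq> 0" by simp
    then have "t \<noteq> 0" using k by (simp only: of_nat_eq_0_iff not_False_eq_True)
    ultimately show ?thesis by simp
  qed
  define d where "d = (\<lambda>k. e * c (k - j) + (- e') * c' (k - j'))"
  have fin1': "finite {k. c (k - j) \<noteq> 0}"
  proof -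
    have "{k. c (k - j) \<noteq> 0} = (\<lambda>k. k + j) ` {k. c k \<noteq> 0}" by force
    then show ?thesis using fin1 by simp
  qed
  have fin2': "finite {k. c' (k - j') \<noteq> 0}"
  proof -
    have "{k. c' (k - j') \<noteq> 0} = (\<lambda>k. k + j') ` {k. c' k \<noteq> 0}" by force
    then show ?thesis using fin2 by simp
  qed
  have dfin: "finite {k. d k \<noteq> 0}"
    by (rule finite_subset[OF _ finite_UnI[OF fin1' fin2']]) (auto simp: d_def)
  have dz: "\<forall>t\<in>S. t \<noteq> 0 \<and> lpeval d t = 0"
  proof
    fix t assume "t \<in> S"
    then have g: "t \<noteq> 0" "1 - t ^ 3 \<noteq> 0" using S_good by auto
    have "\<epsilon> * t powi j * (1 - t ^ 3) * lpeval c t = \<epsilon>' * t powi j' * (1 - t ^ 3) * lpeval c' t"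
      using X1 X2 g by metis
    then have eq1: "\<epsilon> * t powi j * lpeval c t = \<epsilon>' * t powi j' * lpeval c' t" using g(2) by (simp add: mult.assoc)
    have "lpeval d t = of_int e * lpeval (\<lambda>k. c (k - j)) t + of_int (-e') * lpeval (\<lambda>k. c' (k - j')) t"
      unfolding d_def by (rule lp_lin[OF fin1' fin2'])
    then have ld: "lpeval d t = of_int e * (t powi j * lpeval c t) + of_int (-e') * (t powi j' * lpeval c' t)"
      using lp_shift[OF fin1 g(1), of j] lp_shift[OF fin2 g(1), of j'] by simp
    have "lpeval d t = \<epsilon> * t powi j * lpeval c t - \<epsilon>' * t powi j' * lpeval c' t"
      unfolding ld e(2) e'(2) by (simp add: algebra_simps)
    then show "t \<noteq> 0 \<and> lpeval d t = 0" using g(1) eq1 by simp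
  qed
  have dk: "d k = 0" for k using lp_zero[OF dfin S_inf dz] .
  define \<sigma> where "\<sigma> = e * e'"
  define \<delta> where "\<delta> = j - j'"
  have ee: "e * e = 1" "e' * e' = 1" using e e' by auto
  have cc: "c k = \<sigma> * c' (k + \<delta>)" for k
  proof -
    have h: "e * c k = e' * c' (k + \<delta>)" using dk[of "k + j"] by (simp add: d_def \<delta>_def algebra_simps)
    have "c k = (e * e) * c k" using ee by simp
    also have "\<dots> = e * (e * c k)" by (simp only: mult.assoc)
    also have "\<dots> = \<sigma> * c' (k + \<delta>)" unfolding h by (simp add: \<sigma>_def mult.assoc)
    finally show ?thesis .
  qed
  have sig: "\<sigma> \<noteq> 0" using e e' \<sigma>_def by auto
  have per: "c' (x + 2 * \<delta>) = c' x" for x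
  proof -
    have "\<sigma> * c' ((x + \<delta>) + \<delta>) = c (x + \<delta>)" by (rule cc[symmetric])
    also have "\<dots> = c (- (x + \<delta>))" using sym1 by blast
    also have "\<dots> = \<sigma> * c' (- (x + \<delta>) + \<delta>)" by (rule cc)
    finally have "c' ((x + \<delta>) + \<delta>) = c' (- (x + \<delta>) + \<delta>)" using sig by simp
    moreover have "(x + \<delta>) + \<delta> = x + 2 * \<delta>" "- (x + \<delta>) + \<delta> = - x" by simp_all
    ultimately have "c' (x + 2*\<delta>) = c' (- x)" by simp
    then show ?thesis using sym2 by simp
  qed
  have peri: "c' (x + 2 * \<delta> * int i) = c' x" for x i
  proof (induction i)
    case 0 then show ?case by simp
  next
    case (Suc i)
    have "c' (x + 2 * \<delta> * int (Suc i)) = c' ((x + 2 * \<delta> * int i) + 2 * \<delta>)" by (simp add: algebra_simps)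
    then show ?case using per Suc by simp
  qed
  have "{k. c' k \<noteq> 0} \<noteq> {}" using s2 by (metis sum.empty zero_neq_one)
  then obtain k0 where k0: "c' k0 \<noteq> 0" by auto
  have "\<delta> = 0"
  proof (rule ccontr)
    assume "\<delta> \<noteq> 0"
    have "range (\<lambda>i::nat. k0 + 2 * \<delta> * int i) \<subseteq> {k. c' k \<noteq> 0}" using peri k0 by auto
    then have "finite (range (\<lambda>i::nat. k0 + 2 * \<delta> * int i))" using fin2 finite_subset by blast
    then have "finite (UNIV :: nat set)"
      by (rule finite_imageD) (use \<open>\<delta> \<noteq> 0\<close> in \<open>auto simp: inj_on_def\<close>)
    then show False by simp
  qed
  then have cc0: "c k = \<sigma> * c' k" for k using cc by simp
  have "{k. c k \<noteq> 0} = {k. c' k \<noteq> 0}" using cc0 sig by auto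
  then have "sum c {k. c k \<noteq> 0} = \<sigma> * sum c' {k. c' k \<noteq> 0}"
  proof -
    have "c = (\<lambda>k. \<sigma> * c' k)" using cc0 by auto
    then show ?thesis using \<open>{k. c k \<noteq> 0} = {k. c' k \<noteq> 0}\<close> by (simp add: sum_distrib_left)
  qed
  then have "1 = \<sigma> * 1" using s1 s2 by simp
  then show "c = c'" using cc0 by auto
qed



definition dl :: "int \<Rightarrow> int \<Rightarrow> int" where "dl a k = (if k = a then 1 else 0)"
definition pm :: "int \<Rightarrow> int \<Rightarrow> int" where "pm a k = (if k = a \<or> k = - a then 1 else 0)"

definition c0 :: "nat \<Rightarrow> nat \<Rightarrow> int \<Rightarrow> int" where
  "c0 n m k = (-1)^n * dl 0 k + ((\<Sum>i=1..n-2. (-1)^(n-i) * pm (int i) k) +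
     ((- (\<Sum>j<m. pm (int (n+3*j)) k)) + (\<Sum>j<m. pm (int (n+3*j+1)) k)))"

definition LF :: "int set \<Rightarrow> complex \<Rightarrow> (int \<Rightarrow> int) \<Rightarrow> complex" where
  "LF F t f = (\<Sum>k\<in>F. of_int (f k) * t powi k)"

lemma L_add: "LF F t (\<lambda>k. f k + g k) = LF F t f + LF F t g"
  by (simp add: LF_def sum.distrib algebra_simps)
lemma L_mult: "LF F t (\<lambda>k. a * f k) = of_int a * LF F t f"
  by (simp add: LF_def sum_distrib_left algebra_simps)
lemma L_neg: "LF F t (\<lambda>k. - f k) = - LF F t f"
  by (simp add: LF_def sum_negf)
lemma L_sum: "LF F t (\<lambda>k. \<Sum>i\<in>I. f i k) = (\<Sum>i\<in>I. LF F t (f i))"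
  by (simp add: LF_def sum_distrib_right sum.swap[of _ F])
lemma L_dl: "finite F \<Longrightarrow> a \<in> F \<Longrightarrow> LF F t (dl a) = t powi a"
proof -
  assume "finite F" "a \<in> F"
  have "LF F t (dl a) = (\<Sum>k\<in>F. if k = a then t powi k else 0)"
    unfolding LF_def by (rule sum.cong) (auto simp: dl_def)
  then show ?thesis using \<open>a \<in> F\<close> \<open>finite F\<close> by simp
qed
lemma L_pm: "finite F \<Longrightarrow> a \<in> F \<Longrightarrow> - a \<in> F \<Longrightarrow> a \<noteq> 0 \<Longrightarrow> LF F t (pm a) = t powi a + t powi (- a)"
proof -
  assume F: "finite F" "a \<in> F" "- a \<in> F" "a \<noteq> 0"
  have "pm a = (\<lambda>k. dl a k + dl (-a) k)" using F(4) by (auto simp: pm_def dl_def fun_eq_iff)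
  then show ?thesis using F by (simp add: L_add L_dl)
qed

lemma pm_neg[simp]: "pm a (- k) = pm a k" by (auto simp: pm_def)
lemma dl0_neg[simp]: "dl 0 (- k) = dl 0 k" by (auto simp: dl_def)

lemma c0_sym: "c0 n m k = c0 n m (- k)"
  by (simp add: c0_def)

lemma c0_supp: "{k. c0 n m k \<noteq> 0} \<subseteq> {- int (n + 3*m) .. int (n + 3*m)}"
proof
  fix k assume k: "k \<in> {k. c0 n m k \<noteq> 0}"
  show "k \<in> {- int (n + 3*m) .. int (n + 3*m)}"
  proof (rule ccontr)
    assume out: "k \<notin> {- int (n + 3*m) .. int (n + 3*m)}"
    have z: "pm (int x) k = 0" if "x \<le> n + 3*m" for x using out that by (auto simp: pm_def)
    have "dl 0 k = 0" using out by (auto simp: dl_def)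
    moreover have "(\<Sum>i=1..n-2. (-1)^(n-i) * pm (int i) k) = 0" by (rule sum.neutral) (auto simp: z)
    moreover have "(\<Sum>j<m. pm (int (n+3*j)) k) = 0" by (rule sum.neutral, intro ballI z) auto
    moreover have "(\<Sum>j<m. pm (int (n+3*j+1)) k) = 0" by (rule sum.neutral, intro ballI z) auto
    ultimately have "c0 n m k = 0" by (simp add: c0_def)
    then show False using k by simp
  qed
qed

definition Dl :: "nat \<Rightarrow> nat \<Rightarrow> complex \<Rightarrow> complex" where
  "Dl n m t = (-1) ^ n
    + (\<Sum>i = 1..n - 2. (-1) ^ (n - i) * (t ^ i + inverse (t ^ i)))
    - (\<Sum>k = 0..m - 1. t ^ (n + 3 * k) + inverse (t ^ (n + 3 * k)))
    + (\<Sum>k = 0..m - 1. t ^ (n + 3 * k + 1) + inverse (t ^ (n + 3 * k + 1)))"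

lemma c0_eval:
  assumes "m \<ge> 1" "n \<ge> 2"
  shows "lpeval (c0 n m) t = Dl n m t"
proof -
  define F where "F = {- int (n + 3*m) .. int (n + 3*m)}"
  have fin: "finite F" by (simp add: F_def)
  have "lpeval (c0 n m) t = LF F t (c0 n m)"
    unfolding LF_def F_def by (rule lp_sum[OF _ c0_supp]) simp
  also have "\<dots> = LF F t (\<lambda>k. (-1)^n * dl 0 k + ((\<Sum>i=1..n-2. (-1)^(n-i) * pm (int i) k) +
     ((- (\<Sum>j<m. pm (int (n+3*j)) k)) + (\<Sum>j<m. pm (int (n+3*j+1)) k))))"
    by (simp add: c0_def[abs_def])
  also have "\<dots> = of_int ((-1)^n) * LF F t (dl 0) + ((\<Sum>i=1..n-2. of_int ((-1)^(n-i)) * LF F t (pm (int i))) +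
     ((- (\<Sum>j<m. LF F t (pm (int (n+3*j))))) + (\<Sum>j<m. LF F t (pm (int (n+3*j+1))))))"
    by (simp only: L_add L_mult L_neg L_sum)
  also have "\<dots> = (-1)^n + ((\<Sum>i=1..n-2. (-1)^(n-i) * (t ^ i + inverse (t ^ i))) +
     ((- (\<Sum>j<m. t ^ (n + 3 * j) + inverse (t ^ (n + 3 * j)))) + (\<Sum>j<m. t ^ (n + 3 * j + 1) + inverse (t ^ (n + 3 * j + 1)))))"
  proof -
    have a: "LF F t (dl 0) = 1" using fin by (simp add: L_dl F_def)
    have P: "LF F t (pm (int N)) = t^N + inverse (t^N)" if "N \<le> n + 3*m" "N \<noteq> 0" for N
      using L_pm[of F "int N" t] fin that by (simp add: F_def power_int_minus)
    have b: "(\<Sum>i=1..n-2. of_int ((-1)^(n-i)) * LF F t (pm (int i))) = (\<Sum>i=1..n-2. (-1)^(n-i) * (t ^ i + inverse (t ^ i)))"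
      by (rule sum.cong) (auto simp: P)
    have c: "(\<Sum>j<m. LF F t (pm (int (n+3*j)))) = (\<Sum>j<m. t ^ (n + 3 * j) + inverse (t ^ (n + 3 * j)))"
      by (rule sum.cong, rule refl, rule P) (use assms in auto)
    have d: "(\<Sum>j<m. LF F t (pm (int (n+3*j+1)))) = (\<Sum>j<m. t ^ (n + 3 * j + 1) + inverse (t ^ (n + 3 * j + 1)))"
      by (rule sum.cong, rule refl, rule P) (use assms in auto)
    show ?thesis by (simp only: a b c d) simp
  qed
  also have "\<dots> = Dl n m t"
  proof -
    have "{0..m-1} = {..<m}" using assms by auto
    then show ?thesis unfolding Dl_def by simp
  qed
  finally show ?thesis .
qed




lemma alt1: "(\<Sum>j<2*r+1. (-1::complex)^j) = 1"
  by (induction r) (auto simp: numeral_2_eq_2)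

lemma Dl1: assumes "n \<ge> 2" shows "Dl n m 1 = 1"
proof -
  obtain r where r: "n = r + 2" using assms by (metis add.commute le_Suc_ex)
  have "(1::complex)^r * ((-1)^(r+2) + (\<Sum>i=1..r. (-1)^(r+2-i) * (1^i + inverse (1^i)))) = (\<Sum>j<2*r+1. (-1)^j)"
    using partA[of 1 r] by simp
  then show ?thesis unfolding Dl_def r using alt1[of r] by simp
qed

lemma mainid:
  fixes t :: complex
  assumes t: "t \<noteq> 0" and m: "m \<ge> 1"
  shows "(1 - t) * det (1\<^sub>m (3 - 1) - burau 3 (twisted_torus_braid 3 (3 * m + 1) 2 r) t)
     = t^(r + 3*m) * (1 - t^3) * Dl (r+2) m t"
proof -
  define T where "T = t^(3*m)"
  define w where "w = t^r"
  define a where "a = t^(2*r)"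
  define s where "s = (\<Sum>i<2*r. (-t)^i)"
  define A where "A = (-1)^(r+2) + (\<Sum>i=1..r. (-1)^(r+2-i) * (t^i + inverse (t^i)))"
  define E where "E = (\<Sum>k<m. (t^(r+2+3*k+1) + inverse (t^(r+2+3*k+1))) - (t^(r+2+3*k) + inverse (t^(r+2+3*k))))"
  have det: "det (1\<^sub>m (3 - 1) - burau 3 (twisted_torus_braid 3 (3 * m + 1) 2 r) t) = 1 - t*T*(s-1) + t^2*T^2*a"
  proof -
    have h32: "(3::nat) - 1 = 2" by simp
    have "1\<^sub>m (3 - 1) - burau 3 (twisted_torus_braid 3 (3 * m + 1) 2 r) t
       = mk2 1 (t*T) (-(t*T*a)) (1 - t*T*(s-1))"
      unfolding burau_main h32 one2 minus2 by (simp add: T_def a_def s_def)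
    then show ?thesis by (simp add: mk2_det power2_eq_square algebra_simps)
  qed
  have D: "Dl (r+2) m t = A + E"
  proof -
    have "{0..m-1} = {..<m}" using m by auto
    then show ?thesis unfolding Dl_def A_def E_def by (simp add: sum_subtractf)
  qed
  have hA: "w * A = s + a"
  proof -
    have "w * A = (\<Sum>j<2*r+1. (-t)^j)" using partA[OF t, of r] by (simp add: w_def A_def)
    also have "\<dots> = s + a" by (simp add: s_def a_def power_mult_distrib power_mult)
    finally show ?thesis .
  qed
  have hE: "(1-t^3) * (w*t) * T * E = t*(t-1)*(1-T)*(a*t^2*T - 1)"
  proof -
    have p: "t^(r+1) = w*t" "t^(2*r+2) = a*t^2" "t^(3*m) = T"
      by (simp_all add: w_def T_def a_def power_add power2_eq_square)
    show ?thesis using partE[OF t, of r m, folded E_def] by (simp only: p)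
  qed
  have hs: "(1 + t) * s = 1 - a"
    using one_diff_power_eq[of "-t" "2*r"] by (simp add: s_def a_def power_mult power_mult_distrib)
  have hw: "a = w^2" by (simp add: a_def w_def power_mult mult.commute)
  have "t * ((1 - t) * (1 - t*T*(s-1) + t^2*T^2*a)) = t * ((w*T) * (1 - t^3) * (A + E))"
  proof -
    have i1: "t * ((w*T) * (1 - t^3) * (A + E)) = T*(1-t^3)*t*(w*A) + (1-t^3)*(w*t)*T*E"
      by (simp add: algebra_simps)
    have i2: "T*(1-t^3)*t*(s+a) + t*(t-1)*(1-T)*(a*t^2*T - 1) - t * ((1 - t) * (1 - t*T*(s-1) + t^2*T^2*a))
       = t*T*(1-t)*(1+t)*((1+t)*s - (1-a))"
      by (simp add: algebra_simps power2_eq_square power3_eq_cube)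
    show ?thesis unfolding i1 hA hE using i2 hs by simp
  qed
  then have "(1 - t) * (1 - t*T*(s-1) + t^2*T^2*a) = (w*T) * (1 - t^3) * (A + E)" using t by simp
  then show ?thesis unfolding det D by (simp add: w_def T_def power_add)
qed


theorem lemma3p4:
  fixes n m :: nat and t :: complex
  assumes "n \<ge> 2" and "m \<ge> 1" and "t \<noteq> 0"
  shows "lpeval (alexander_sym 3 (twisted_torus_braid 3 (3 * m + 1) 2 (n - 2))) t =
    (-1) ^ n
    + (\<Sum>i = 1..n - 2. (-1) ^ (n - i) * (t ^ i + inverse (t ^ i)))
    - (\<Sum>k = 0..m - 1. t ^ (n + 3 * k) + inverse (t ^ (n + 3 * k)))
    + (\<Sum>k = 0..m - 1. t ^ (n + 3 * k + 1) + inverse (t ^ (n + 3 * k + 1)))"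
proof -
  obtain r where r: "n = r + 2" using assms(1) by (metis add.commute le_Suc_ex)
  define w where "w = twisted_torus_braid 3 (3 * m + 1) 2 (n - 2)"
  define X where "X = (\<lambda>t::complex. (1 - t) * det (1\<^sub>m (3 - 1) - burau 3 w t))"
  have alex: "alexander_sym 3 w = (THE c. PP X c)" by (simp add: alexander_sym_def PP_def X_def)
  have P0: "PP X (c0 n m)"
    unfolding PP_def
  proof (intro conjI)
    show "finite {k. c0 n m k \<noteq> 0}" by (rule finite_subset[OF c0_supp]) simp
    show "\<forall>k. c0 n m k = c0 n m (- k)" using c0_sym by blast
    have "of_int (sum (c0 n m) {k. c0 n m k \<noteq> 0}) = lpeval (c0 n m) 1" by (simp add: lp_one)
    also have "\<dots> = (1::complex)" using c0_eval[OF assms(2,1)] Dl1[OF assms(1)] by simp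
    finally show "sum (c0 n m) {k. c0 n m k \<noteq> 0} = 1" by (simp only: of_int_eq_1_iff)
    show "\<exists>\<epsilon>\<in>{1, -1::complex}. \<exists>j::int. \<forall>t::complex. t \<noteq> 0 \<and> 1 - t ^ 3 \<noteq> 0 \<longrightarrow>
        X t = \<epsilon> * t powi j * (1 - t ^ 3) * lpeval (c0 n m) t"
    proof (intro bexI[of _ 1] exI[of _ "int (r + 3*m)"] allI impI)
      fix t :: complex assume "t \<noteq> 0 \<and> 1 - t ^ 3 \<noteq> 0"
      then have t: "t \<noteq> 0" by simp
      have "X t = t^(r + 3*m) * (1 - t^3) * Dl (r+2) m t"
        unfolding X_def w_def r using mainid[OF t assms(2), of r] by simp
      moreover have "t powi int (r + 3*m) = t^(r + 3*m)" by (rule power_int_of_nat)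
      ultimately show "X t = 1 * t powi int (r + 3*m) * (1 - t ^ 3) * lpeval (c0 n m) t"
        using c0_eval[OF assms(2,1)] r by (simp only: mult_1_left)
    qed simp
  qed
  have "alexander_sym 3 w = c0 n m"
    unfolding alex
  proof (rule the_equality)
    show "PP X (c0 n m)" by (rule P0)
    fix c assume "PP X c"
    then show "c = c0 n m" using uniq P0 by blast
  qed
  then show ?thesis using c0_eval[OF assms(2,1), of t] unfolding w_def Dl_def by simp
qed

end
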